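(* Let $f=\frac1n\sum_{i=1}^n f_i$ be $L$-smooth and each $f_i$ be $L_i$-smooth, with $\widetilde L=\sqrt{\frac1n\sum_i L_i^2}$. Let the iterates be generated by Algorithm EControl (described in the context) with $\eta=\frac{\delta}{4k}$ for some $k\ge1$ and stepsize $\gamma\le\frac{\delta}{32\sqrt2\,\widetilde L}$. With $E_t=\frac1n\sum_i\mathbb{E}\|e_t^i\|^2$ and $H_t=\frac1n\sum_i\mathbb{E}\|\eta e_t^i+g_t^i-h_t^i\|^2$, for every $t\ge0$, $$H_{t+1}\le\left(1-\frac\delta{32}\right)H_t+\left(\frac{8\delta^3}{k^44^4}+\frac{128\widetilde L^2\gamma^2\delta}{k^24^2}\right)E_t+\frac{128\widetilde L^2\gamma^2}{\delta}\mathbb{E}\|\nabla f(x_t)\|^2+\frac{64}{\delta}\left(1+\frac{\widetilde L^2\gamma^2}{n}\right)\sigma^2.$$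
   Context: $\mathcal{C}_\delta$ ($0<\delta\le1$) is a possibly randomized map with $\mathbb{E}\|\mathcal{C}_\delta(x)-x\|^2\le(1-\delta)\|x\|^2$ for all $x$, independent randomness at each call. Stochastic gradient oracles $g^i(x)$ of $f_i$ satisfy $\mathbb{E}[g^i(x)]=\nabla f_i(x)$, $\mathbb{E}\|g^i(x)-\nabla f_i(x)\|^2\le\sigma^2$, fresh independent randomness per call. $L$-smooth means $L$-Lipschitz gradient. Algorithm EControl: input $x_0$, $\gamma>0$, $\eta>0$, $e_0^i=0$, $h_0^i=g^i(x_0)$, $h_0=\frac1n\sum_i h_0^i$. For $t=0,1,\dots$: $g_t^i=g^i(x_t)$, $\Delta_t^i=\mathcal{C}_\delta(\eta e_t^i+g_t^i-h_t^i)$, $e_{t+1}^i=e_t^i+g_t^i-h_t^i-\Delta_t^i$, $h_{t+1}^i=h_t^i+\Delta_t^i$; $x_{t+1}=x_t-\gamma h_t-\frac\gamma n\sum_i\Delta_t^i$, $h_{t+1}=h_t+\frac1n\sum_i\Delta_t^i$. *)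

theory Defs
  imports "HOL-Probability.Probability"
begin

text \<open>Indices of the independent random seeds used by Algorithm EControl:
  Init i   : oracle call of worker i producing h_0^i = g^i(x_0)
  Grad t i : oracle call of worker i producing g_t^i = g^i(x_t)
  Comp t i : call of the compressor by worker i at step t.\<close>
datatype seed_idx = Init nat | Grad nat nat | Comp nat nat

text \<open>State of EControl at time t: (x_t, e_t, h_t (per worker), h_t (aggregate)),
  as a deterministic function of the seeds z.  C s v is the compressor applied to v
  with randomness s; G i w x is the stochastic gradient oracle of worker i at x
  with randomness w.\<close>
fun ec_state ::
  "nat \<Rightarrow> real \<Rightarrow> real \<Rightarrow> ('r \<Rightarrow> 'v \<Rightarrow> 'v) \<Rightarrow> (nat \<Rightarrow> 'r \<Rightarrow> 'v \<Rightarrow> 'v) \<Rightarrow> 'v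
    \<Rightarrow> (seed_idx \<Rightarrow> 'r) \<Rightarrow> nat \<Rightarrow> 'v \<times> (nat \<Rightarrow> 'v) \<times> (nat \<Rightarrow> 'v) \<times> 'v::real_vector"
where
  "ec_state n \<gamma> \<eta> C G x0 z 0 =
     (x0, (\<lambda>i. 0), (\<lambda>i. G i (z (Init i)) x0),
      (1 / real n) *\<^sub>R (\<Sum>i<n. G i (z (Init i)) x0))"
| "ec_state n \<gamma> \<eta> C G x0 z (Suc t) =
     (case ec_state n \<gamma> \<eta> C G x0 z t of (x, e, h, hb) \<Rightarrow>
       (let g = (\<lambda>i. G i (z (Grad t i)) x);
            D = (\<lambda>i. C (z (Comp t i)) (\<eta> *\<^sub>R e i + g i - h i))
        in (x - \<gamma> *\<^sub>R hb - (\<gamma> / real n) *\<^sub>R (\<Sum>i<n. D i),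
            (\<lambda>i. e i + g i - h i - D i),
            (\<lambda>i. h i + D i),
            hb + (1 / real n) *\<^sub>R (\<Sum>i<n. D i))))"

definition ec_x where
  "ec_x n \<gamma> \<eta> C G x0 z t = fst (ec_state n \<gamma> \<eta> C G x0 z t)"
definition ec_e where
  "ec_e n \<gamma> \<eta> C G x0 z t i = fst (snd (ec_state n \<gamma> \<eta> C G x0 z t)) i"
definition ec_h where
  "ec_h n \<gamma> \<eta> C G x0 z t i = fst (snd (snd (ec_state n \<gamma> \<eta> C G x0 z t))) i"
definition ec_g where
  "ec_g n \<gamma> \<eta> C G x0 z t i = G i (z (Grad t i)) (ec_x n \<gamma> \<eta> C G x0 z t)"

definition seed_distr :: "'r measure \<Rightarrow> (nat \<Rightarrow> 'r measure) \<Rightarrow> seed_idx \<Rightarrow> 'r measure" where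
  "seed_distr \<mu> \<nu> j = (case j of Comp t i \<Rightarrow> \<mu> | Grad t i \<Rightarrow> \<nu> i | Init i \<Rightarrow> \<nu> i)"

end

theory Submission
  imports Defs
begin


lemma young2:
  fixes a b :: "'a::real_normed_vector"
  assumes s: "s > 0"
  shows "(norm (a + b))\<^sup>2 \<le> (1 + s) * (norm a)\<^sup>2 + (1 + 1 / s) * (norm b)\<^sup>2"
proof -
  have "norm (a + b) \<le> norm a + norm b" by (rule norm_triangle_ineq)
  then have "(norm (a + b))\<^sup>2 \<le> (norm a + norm b)\<^sup>2"
    by (intro power_mono) auto
  also have "\<dots> \<le> (1 + s) * (norm a)\<^sup>2 + (1 + 1 / s) * (norm b)\<^sup>2"
  proof -
    have "0 \<le> (s * norm a - norm b)\<^sup>2 / s" using s by simp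
    then show ?thesis using s by (simp add: field_simps power2_eq_square)
  qed
  finally show ?thesis .
qed

lemma avg_sq:
  fixes u :: "nat \<Rightarrow> 'a::real_normed_vector"
  assumes "n \<ge> 1"
  shows "(norm ((1 / real n) *\<^sub>R (\<Sum>j<n. u j)))\<^sup>2 \<le> (1 / real n) * (\<Sum>j<n. (norm (u j))\<^sup>2)"
proof -
  have "norm (\<Sum>j<n. u j) \<le> (\<Sum>j<n. norm (u j))" by (rule norm_sum)
  then have "(norm (\<Sum>j<n. u j))\<^sup>2 \<le> (\<Sum>j<n. norm (u j))\<^sup>2"
    by (intro power_mono) auto
  also have "\<dots> \<le> (\<Sum>j<n. (norm (u j))\<^sup>2) * real n"
    using sum_squared_le_sum_of_squares[of "\<lambda>j. norm (u j)" "{..<n}"] by simp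
  finally have *: "(norm (\<Sum>j<n. u j))\<^sup>2 \<le> (\<Sum>j<n. (norm (u j))\<^sup>2) * real n" .
  have "(norm ((1 / real n) *\<^sub>R (\<Sum>j<n. u j)))\<^sup>2 = (norm (\<Sum>j<n. u j))\<^sup>2 / (real n)\<^sup>2"
    using assms by (simp add: power_divide)
  also have "\<dots> \<le> (\<Sum>j<n. (norm (u j))\<^sup>2) * real n / (real n)\<^sup>2"
    using * by (intro divide_right_mono) auto
  also have "\<dots> = (1 / real n) * (\<Sum>j<n. (norm (u j))\<^sup>2)"
    using assms by (simp add: power2_eq_square field_simps)
  finally show ?thesis .
qed

lemma split_bound:
  fixes D :: "'i \<Rightarrow> 'r measure" and F B :: "('i \<Rightarrow> 'r) \<Rightarrow> ennreal"
  assumes D: "\<And>j. prob_space (D j)"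
    and F: "F \<in> borel_measurable (PiM UNIV D)" and B: "B \<in> borel_measurable (PiM UNIV D)"
    and inner: "\<And>z. z \<in> space (PiM UNIV D) \<Longrightarrow> (\<integral>\<^sup>+x. F (z(k:=x)) \<partial>D k) \<le> B z"
    and inv: "\<And>z x. z \<in> space (PiM UNIV D) \<Longrightarrow> x \<in> space (D k) \<Longrightarrow> B (z(k:=x)) = B z"
  shows "(\<integral>\<^sup>+z. F z \<partial>PiM UNIV D) \<le> (\<integral>\<^sup>+z. B z \<partial>PiM UNIV D)"
proof -
  let ?I = "UNIV - {k}"
  let ?Q = "D k \<Otimes>\<^sub>M PiM ?I D"
  let ?u = "\<lambda>(x, X). X(k := x)"
  interpret Dk: prob_space "D k" by (rule D)
  interpret PI: prob_space "PiM ?I D" by (rule prob_space_PiM) (use D in auto)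
  interpret Q: pair_sigma_finite "D k" "PiM ?I D" ..
  have ins: "insert k ?I = UNIV" by auto
  have dst: "distr ?Q (PiM UNIV D) ?u = PiM UNIV D"
    using distr_pair_PiM_eq_PiM[of ?I D k] D unfolding ins by auto
  have um: "?u \<in> measurable ?Q (PiM UNIV D)"
  proof -
    have "(\<lambda>p. (snd p)(k := fst p)) \<in> measurable ?Q (PiM UNIV D)"
      by (rule measurable_fun_upd[where J="?I"]) auto
    then show ?thesis by (simp add: case_prod_beta')
  qed
  have eqF: "(\<integral>\<^sup>+z. F z \<partial>PiM UNIV D) = (\<integral>\<^sup>+X. (\<integral>\<^sup>+x. F (X(k:=x)) \<partial>D k) \<partial>PiM ?I D)"
  proof -
    have "(\<integral>\<^sup>+z. F z \<partial>PiM UNIV D) = (\<integral>\<^sup>+z. F z \<partial>distr ?Q (PiM UNIV D) ?u)" by (simp add: dst)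
    also have "\<dots> = (\<integral>\<^sup>+p. F (?u p) \<partial>?Q)" using F by (intro nn_integral_distr[OF um]) simp
    also have "\<dots> = (\<integral>\<^sup>+X. (\<integral>\<^sup>+x. F (?u (x, X)) \<partial>D k) \<partial>PiM ?I D)"
      by (rule Q.nn_integral_snd[symmetric]) (rule measurable_compose[OF um F])
    finally show ?thesis by simp
  qed
  have eqB: "(\<integral>\<^sup>+z. B z \<partial>PiM UNIV D) = (\<integral>\<^sup>+X. (\<integral>\<^sup>+x. B (X(k:=x)) \<partial>D k) \<partial>PiM ?I D)"
  proof -
    have "(\<integral>\<^sup>+z. B z \<partial>PiM UNIV D) = (\<integral>\<^sup>+z. B z \<partial>distr ?Q (PiM UNIV D) ?u)" by (simp add: dst)
    also have "\<dots> = (\<integral>\<^sup>+p. B (?u p) \<partial>?Q)" using B by (intro nn_integral_distr[OF um]) simp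
    also have "\<dots> = (\<integral>\<^sup>+X. (\<integral>\<^sup>+x. B (?u (x, X)) \<partial>D k) \<partial>PiM ?I D)"
      by (rule Q.nn_integral_snd[symmetric]) (rule measurable_compose[OF um B])
    finally show ?thesis by simp
  qed
  obtain x0 where x0: "x0 \<in> space (D k)" using Dk.not_empty by blast
  have "(\<integral>\<^sup>+x. F (X(k:=x)) \<partial>D k) \<le> (\<integral>\<^sup>+x. B (X(k:=x)) \<partial>D k)" if X: "X \<in> space (PiM ?I D)" for X
  proof -
    have z0: "X(k:=x0) \<in> space (PiM UNIV D)"
      using measurable_space[OF um, of "(x0, X)"] x0 X by (simp add: space_pair_measure)
    have "(\<integral>\<^sup>+x. F (X(k:=x)) \<partial>D k) = (\<integral>\<^sup>+x. F ((X(k:=x0))(k:=x)) \<partial>D k)" by simp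
    also have "\<dots> \<le> B (X(k:=x0))" by (rule inner[OF z0])
    also have "\<dots> = (\<integral>\<^sup>+x. B (X(k:=x0)) \<partial>D k)" by (simp add: Dk.emeasure_space_1)
    also have "\<dots> = (\<integral>\<^sup>+x. B (X(k:=x)) \<partial>D k)"
      by (rule nn_integral_cong) (metis inv[OF z0] fun_upd_upd)
    finally show ?thesis .
  qed
  then show ?thesis unfolding eqF eqB by (rule nn_integral_mono) blast
qed




lemma noise_inner:
  fixes G :: "'r \<Rightarrow> 'v \<Rightarrow> 'v::euclidean_space"
  assumes N: "prob_space N"
    and Gm: "(\<lambda>(w, x). G w x) \<in> borel_measurable (N \<Otimes>\<^sub>M borel)"
    and Gi: "integrable N (\<lambda>w. G w x)"
    and Gu: "(\<integral>w. G w x \<partial>N) = g"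
    and Gv: "(\<integral>\<^sup>+ w. ennreal ((norm (G w x - g))\<^sup>2) \<partial>N) \<le> ennreal (\<sigma>\<^sup>2)"
  shows "(\<integral>\<^sup>+ w. ennreal ((norm (a + G w x - g))\<^sup>2) \<partial>N) \<le> ennreal ((norm a)\<^sup>2 + \<sigma>\<^sup>2)"
proof -
  interpret N: prob_space N by (rule N)
  let ?xi = "\<lambda>w. G w x - g"
  have Gm1: "(\<lambda>w. G w x) \<in> borel_measurable N"
  proof -
    have "(\<lambda>w. (w, x)) \<in> measurable N (N \<Otimes>\<^sub>M borel)" by measurable
    from measurable_compose[OF this Gm] show ?thesis by simp
  qed
  have xim: "?xi \<in> borel_measurable N" using Gm1 by measurable
  have xii: "integrable N ?xi" using Gi by simp
  have xi0: "(\<integral>w. ?xi w \<partial>N) = 0" using Gi Gu by (simp add: N.prob_space)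
  have sqm: "(\<lambda>w. (norm (?xi w))\<^sup>2) \<in> borel_measurable N" using xim by measurable
  have sqi: "integrable N (\<lambda>w. (norm (?xi w))\<^sup>2)"
  proof (rule integrableI_bounded[OF sqm])
    have "(\<integral>\<^sup>+ w. ennreal (norm ((norm (?xi w))\<^sup>2)) \<partial>N) = (\<integral>\<^sup>+ w. ennreal ((norm (?xi w))\<^sup>2) \<partial>N)"
      by simp
    also have "\<dots> < \<infinity>" using Gv by (simp add: le_less_trans)
    finally show "(\<integral>\<^sup>+ w. ennreal (norm ((norm (?xi w))\<^sup>2)) \<partial>N) < \<infinity>" .
  qed
  have sqle: "(\<integral>w. (norm (?xi w))\<^sup>2 \<partial>N) \<le> \<sigma>\<^sup>2"
  proof -
    have "ennreal (\<integral>w. (norm (?xi w))\<^sup>2 \<partial>N) = (\<integral>\<^sup>+ w. ennreal ((norm (?xi w))\<^sup>2) \<partial>N)"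
      by (rule nn_integral_eq_integral[symmetric, OF sqi]) auto
    with Gv have "ennreal (\<integral>w. (norm (?xi w))\<^sup>2 \<partial>N) \<le> ennreal (\<sigma>\<^sup>2)" by simp
    then show ?thesis by (simp add: ennreal_le_iff)
  qed
  have expand: "(norm (a + ?xi w))\<^sup>2 = (norm a)\<^sup>2 + 2 * (a \<bullet> ?xi w) + (norm (?xi w))\<^sup>2" for w
    by (simp add: power2_norm_eq_inner inner_add_left inner_add_right inner_commute)
  have ii: "integrable N (\<lambda>w. (norm a)\<^sup>2 + 2 * (a \<bullet> ?xi w) + (norm (?xi w))\<^sup>2)"
    using xii sqi by auto
  have "(\<integral>\<^sup>+ w. ennreal ((norm (a + G w x - g))\<^sup>2) \<partial>N)
      = (\<integral>\<^sup>+ w. ennreal ((norm a)\<^sup>2 + 2 * (a \<bullet> ?xi w) + (norm (?xi w))\<^sup>2) \<partial>N)"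
    by (rule nn_integral_cong) (metis expand add_diff_eq)
  also have "\<dots> = ennreal (\<integral>w. (norm a)\<^sup>2 + 2 * (a \<bullet> ?xi w) + (norm (?xi w))\<^sup>2 \<partial>N)"
    by (rule nn_integral_eq_integral[OF ii]) (auto simp: expand[symmetric])
  also have "(\<integral>w. (norm a)\<^sup>2 + 2 * (a \<bullet> ?xi w) + (norm (?xi w))\<^sup>2 \<partial>N)
      = (norm a)\<^sup>2 + 2 * (a \<bullet> (\<integral>w. ?xi w \<partial>N)) + (\<integral>w. (norm (?xi w))\<^sup>2 \<partial>N)"
    using xii sqi by (simp add: N.prob_space)
  also have "\<dots> \<le> (norm a)\<^sup>2 + \<sigma>\<^sup>2" using xi0 sqle by simp
  finally show ?thesis by (simp add: ennreal_leI)
qed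




definition ec_hb where
  "ec_hb n \<gamma> \<eta> C G x0 z t = snd (snd (snd (ec_state n \<gamma> \<eta> C G x0 z t)))"
definition ec_D where
  "ec_D n \<gamma> \<eta> C G x0 z t i = C (z (Comp t i))
     (\<eta> *\<^sub>R ec_e n \<gamma> \<eta> C G x0 z t i + ec_g n \<gamma> \<eta> C G x0 z t i - ec_h n \<gamma> \<eta> C G x0 z t i)"

lemma ec_state_Suc_expand:
  "ec_state n \<gamma> \<eta> C G x0 z (Suc t) =
    (ec_x n \<gamma> \<eta> C G x0 z t - \<gamma> *\<^sub>R ec_hb n \<gamma> \<eta> C G x0 z t - (\<gamma> / real n) *\<^sub>R (\<Sum>i<n. ec_D n \<gamma> \<eta> C G x0 z t i),
     (\<lambda>i. ec_e n \<gamma> \<eta> C G x0 z t i + ec_g n \<gamma> \<eta> C G x0 z t i - ec_h n \<gamma> \<eta> C G x0 z t i - ec_D n \<gamma> \<eta> C G x0 z t i),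
     (\<lambda>i. ec_h n \<gamma> \<eta> C G x0 z t i + ec_D n \<gamma> \<eta> C G x0 z t i),
     ec_hb n \<gamma> \<eta> C G x0 z t + (1 / real n) *\<^sub>R (\<Sum>i<n. ec_D n \<gamma> \<eta> C G x0 z t i))"
  by (simp add: ec_x_def ec_e_def ec_h_def ec_hb_def ec_D_def ec_g_def split_beta Let_def)

lemma ec_x_Suc: "ec_x n \<gamma> \<eta> C G x0 z (Suc t) =
   ec_x n \<gamma> \<eta> C G x0 z t - \<gamma> *\<^sub>R ec_hb n \<gamma> \<eta> C G x0 z t - (\<gamma> / real n) *\<^sub>R (\<Sum>i<n. ec_D n \<gamma> \<eta> C G x0 z t i)"
  by (subst ec_x_def, subst ec_state_Suc_expand) simp
lemma ec_e_Suc: "ec_e n \<gamma> \<eta> C G x0 z (Suc t) i =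
   ec_e n \<gamma> \<eta> C G x0 z t i + ec_g n \<gamma> \<eta> C G x0 z t i - ec_h n \<gamma> \<eta> C G x0 z t i - ec_D n \<gamma> \<eta> C G x0 z t i"
  by (subst ec_e_def, subst ec_state_Suc_expand) simp
lemma ec_h_Suc: "ec_h n \<gamma> \<eta> C G x0 z (Suc t) i = ec_h n \<gamma> \<eta> C G x0 z t i + ec_D n \<gamma> \<eta> C G x0 z t i"
  by (subst ec_h_def, subst ec_state_Suc_expand) simp
lemma ec_hb_Suc: "ec_hb n \<gamma> \<eta> C G x0 z (Suc t) =
   ec_hb n \<gamma> \<eta> C G x0 z t + (1 / real n) *\<^sub>R (\<Sum>i<n. ec_D n \<gamma> \<eta> C G x0 z t i)"
  by (subst ec_hb_def, subst ec_state_Suc_expand) simp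

lemma ec_x_0: "ec_x n \<gamma> \<eta> C G x0 z 0 = x0" by (simp add: ec_x_def)
lemma ec_e_0: "ec_e n \<gamma> \<eta> C G x0 z 0 i = 0" by (simp add: ec_e_def)
lemma ec_h_0: "ec_h n \<gamma> \<eta> C G x0 z 0 i = G i (z (Init i)) x0" by (simp add: ec_h_def)
lemma ec_hb_0: "ec_hb n \<gamma> \<eta> C G x0 z 0 = (1 / real n) *\<^sub>R (\<Sum>i<n. G i (z (Init i)) x0)"
  by (simp add: ec_hb_def)

lemma ec_hb_avg: "ec_hb n \<gamma> \<eta> C G x0 z t = (1 / real n) *\<^sub>R (\<Sum>i<n. ec_h n \<gamma> \<eta> C G x0 z t i)"
proof (induction t)
  case 0 then show ?case by (simp add: ec_hb_0 ec_h_0)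
next
  case (Suc t) then show ?case
    by (simp add: ec_hb_Suc ec_h_Suc sum.distrib scaleR_right_distrib)
qed

fun late :: "nat \<Rightarrow> seed_idx \<Rightarrow> bool" where
  "late t (Init i) = False"
| "late t (Grad s i) = (t \<le> s)"
| "late t (Comp s i) = (t \<le> s)"

lemma ec_state_late: "late t k \<Longrightarrow> ec_state n \<gamma> \<eta> C G x0 (z(k:=a)) t = ec_state n \<gamma> \<eta> C G x0 z t"
proof (induction t)
  case 0 then show ?case by (cases k) auto
next
  case (Suc t)
  have l: "late t k" using Suc.prems by (cases k) auto
  have ng: "Grad t i \<noteq> k" "Comp t i \<noteq> k" for i using Suc.prems by auto
  show ?case using Suc.IH[OF l] ng by (simp add: Let_def split_beta)
qed

lemma late_x: "late t k \<Longrightarrow> ec_x n \<gamma> \<eta> C G x0 (z(k:=a)) t = ec_x n \<gamma> \<eta> C G x0 z t"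
  by (simp add: ec_x_def ec_state_late)
lemma late_e: "late t k \<Longrightarrow> ec_e n \<gamma> \<eta> C G x0 (z(k:=a)) t i = ec_e n \<gamma> \<eta> C G x0 z t i"
  by (simp add: ec_e_def ec_state_late)
lemma late_h: "late t k \<Longrightarrow> ec_h n \<gamma> \<eta> C G x0 (z(k:=a)) t i = ec_h n \<gamma> \<eta> C G x0 z t i"
  by (simp add: ec_h_def ec_state_late)
lemma late_hb: "late t k \<Longrightarrow> ec_hb n \<gamma> \<eta> C G x0 (z(k:=a)) t = ec_hb n \<gamma> \<eta> C G x0 z t"
  by (simp add: ec_hb_def ec_state_late)

locale ecl =
  fixes n :: nat and \<gamma> \<eta> :: real and C :: "'r \<Rightarrow> 'v \<Rightarrow> 'v::euclidean_space"
    and G :: "nat \<Rightarrow> 'r \<Rightarrow> 'v \<Rightarrow> 'v" and x0 :: 'v and \<mu> :: "'r measure" and \<nu> :: "nat \<Rightarrow> 'r measure"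
  assumes Dprob: "\<And>j. prob_space (seed_distr \<mu> \<nu> j)"
    and C_meas: "(\<lambda>(s, v). C s v) \<in> borel_measurable (\<mu> \<Otimes>\<^sub>M borel)"
    and G_meas: "\<And>i. i < n \<Longrightarrow> (\<lambda>(w, x). G i w x) \<in> borel_measurable (\<nu> i \<Otimes>\<^sub>M borel)"
begin

abbreviation "P \<equiv> PiM UNIV (seed_distr \<mu> \<nu>)"

lemma comp_meas: "(\<lambda>z. z j) \<in> measurable P (seed_distr \<mu> \<nu> j)"
  by (rule measurable_component_singleton) simp

lemma G_comp:
  assumes "i < n" "a \<in> measurable P (\<nu> i)" "b \<in> borel_measurable P"
  shows "(\<lambda>z. G i (a z) (b z)) \<in> borel_measurable P"
proof -
  have "(\<lambda>z. (a z, b z)) \<in> measurable P (\<nu> i \<Otimes>\<^sub>M borel)" using assms by measurable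
  from measurable_compose[OF this G_meas[OF assms(1)]] show ?thesis by simp
qed

lemma C_comp:
  assumes "a \<in> measurable P \<mu>" "b \<in> borel_measurable P"
  shows "(\<lambda>z. C (a z) (b z)) \<in> borel_measurable P"
proof -
  have "(\<lambda>z. (a z, b z)) \<in> measurable P (\<mu> \<Otimes>\<^sub>M borel)" using assms by measurable
  from measurable_compose[OF this C_meas] show ?thesis by simp
qed

lemma grad_seed: "(\<lambda>z. z (Grad t i)) \<in> measurable P (\<nu> i)"
  using comp_meas[of "Grad t i"] by (simp add: seed_distr_def)
lemma init_seed: "(\<lambda>z. z (Init i)) \<in> measurable P (\<nu> i)"
  using comp_meas[of "Init i"] by (simp add: seed_distr_def)
lemma comp_seed: "(\<lambda>z. z (Comp t i)) \<in> measurable P \<mu>"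
  using comp_meas[of "Comp t i"] by (simp add: seed_distr_def)

abbreviation "X z t \<equiv> ec_x n \<gamma> \<eta> C G x0 z t"
abbreviation "E z t i \<equiv> ec_e n \<gamma> \<eta> C G x0 z t i"
abbreviation "H z t i \<equiv> ec_h n \<gamma> \<eta> C G x0 z t i"
abbreviation "Hb z t \<equiv> ec_hb n \<gamma> \<eta> C G x0 z t"
abbreviation "Gt z t i \<equiv> ec_g n \<gamma> \<eta> C G x0 z t i"
abbreviation "Dt z t i \<equiv> ec_D n \<gamma> \<eta> C G x0 z t i"

lemma meas_all:
  "(\<lambda>z. X z t) \<in> borel_measurable P \<and> (\<lambda>z. Hb z t) \<in> borel_measurable P \<and>
   (\<forall>i<n. (\<lambda>z. E z t i) \<in> borel_measurable P \<and> (\<lambda>z. H z t i) \<in> borel_measurable P)"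
proof (induction t)
  case 0
  have "(\<lambda>z. G i (z (Init i)) x0) \<in> borel_measurable P" if "i < n" for i
    by (rule G_comp[OF that init_seed]) simp
  then show ?case by (simp add: ec_x_0 ec_hb_0 ec_e_0 ec_h_0)
next
  case (Suc t)
  then have xm: "(\<lambda>z. X z t) \<in> borel_measurable P" and hbm: "(\<lambda>z. Hb z t) \<in> borel_measurable P"
    and em: "\<And>i. i < n \<Longrightarrow> (\<lambda>z. E z t i) \<in> borel_measurable P"
    and hm: "\<And>i. i < n \<Longrightarrow> (\<lambda>z. H z t i) \<in> borel_measurable P" by auto
  have gm: "(\<lambda>z. Gt z t i) \<in> borel_measurable P" if "i < n" for i
    unfolding ec_g_def by (rule G_comp[OF that grad_seed xm])
  have dm: "(\<lambda>z. Dt z t i) \<in> borel_measurable P" if "i < n" for i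
    unfolding ec_D_def
    by (rule C_comp[OF comp_seed]) (use em[OF that] gm[OF that] hm[OF that] in measurable)
  have sm: "(\<lambda>z. \<Sum>i<n. Dt z t i) \<in> borel_measurable P"
    by (rule borel_measurable_sum) (use dm in auto)
  show ?case
    unfolding ec_x_Suc ec_hb_Suc ec_e_Suc ec_h_Suc
    using xm hbm sm
    by (auto intro!: borel_measurable_add borel_measurable_diff borel_measurable_scaleR em gm hm dm)
qed

lemma meas_x: "(\<lambda>z. X z t) \<in> borel_measurable P" using meas_all by blast
lemma meas_hb: "(\<lambda>z. Hb z t) \<in> borel_measurable P" using meas_all by blast
lemma meas_e: "i < n \<Longrightarrow> (\<lambda>z. E z t i) \<in> borel_measurable P" using meas_all by blast
lemma meas_h: "i < n \<Longrightarrow> (\<lambda>z. H z t i) \<in> borel_measurable P" using meas_all by blast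
lemma meas_g: "i < n \<Longrightarrow> (\<lambda>z. Gt z t i) \<in> borel_measurable P"
  unfolding ec_g_def by (rule G_comp[OF _ grad_seed meas_x])
lemma meas_D: "i < n \<Longrightarrow> (\<lambda>z. Dt z t i) \<in> borel_measurable P"
  unfolding ec_D_def
  by (rule C_comp[OF comp_seed]) (use meas_e meas_g meas_h in measurable)

end




locale ecl2 = ecl n \<gamma> \<eta> C G x0 \<mu> \<nu>
  for n :: nat and \<gamma> \<eta> :: real and C :: "'r \<Rightarrow> 'v \<Rightarrow> 'v::euclidean_space"
    and G :: "nat \<Rightarrow> 'r \<Rightarrow> 'v \<Rightarrow> 'v" and x0 :: 'v and \<mu> :: "'r measure" and \<nu> :: "nat \<Rightarrow> 'r measure" +
  fixes gradf :: "nat \<Rightarrow> 'v \<Rightarrow> 'v" and \<delta> \<sigma> :: real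
  assumes C_contr: "\<And>v. (\<integral>\<^sup>+ s. ennreal ((norm (C s v - v))\<^sup>2) \<partial>\<mu>) \<le> ennreal ((1 - \<delta>) * (norm v)\<^sup>2)"
    and G_int: "\<And>i x. i < n \<Longrightarrow> integrable (\<nu> i) (\<lambda>w. G i w x)"
    and G_unbiased: "\<And>i x. i < n \<Longrightarrow> (\<integral>w. G i w x \<partial>\<nu> i) = gradf i x"
    and G_var: "\<And>i x. i < n \<Longrightarrow>
           (\<integral>\<^sup>+ w. ennreal ((norm (G i w x - gradf i x))\<^sup>2) \<partial>\<nu> i) \<le> ennreal (\<sigma>\<^sup>2)"
    and gradf_meas: "\<And>i. i < n \<Longrightarrow> gradf i \<in> borel_measurable borel"
begin

lemma nu_prob: "i < n \<Longrightarrow> prob_space (\<nu> i)"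
  using Dprob[of "Init i"] by (simp add: seed_distr_def)

lemma meas_gradf: "i < n \<Longrightarrow> b \<in> borel_measurable P \<Longrightarrow> (\<lambda>z. gradf i (b z)) \<in> borel_measurable P"
  using measurable_compose[of b P borel "gradf i" borel] gradf_meas by blast

lemma bound_xi:
  assumes i: "i < n"
  shows "(\<integral>\<^sup>+z. ennreal ((norm (Gt z t i - gradf i (X z t)))\<^sup>2) \<partial>P) \<le> (\<integral>\<^sup>+z. ennreal (\<sigma>\<^sup>2) \<partial>P)"
proof (rule split_bound[where k="Grad t i", OF Dprob])
  show "(\<lambda>z. ennreal ((norm (Gt z t i - gradf i (X z t)))\<^sup>2)) \<in> borel_measurable P"
    using meas_g[OF i] meas_gradf[OF i meas_x] by measurable
next
  fix z assume z: "z \<in> space P"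
  have "(\<integral>\<^sup>+x. ennreal ((norm (Gt (z(Grad t i := x)) t i - gradf i (X (z(Grad t i := x)) t)))\<^sup>2) \<partial>seed_distr \<mu> \<nu> (Grad t i))
     = (\<integral>\<^sup>+x. ennreal ((norm (G i x (X z t) - gradf i (X z t)))\<^sup>2) \<partial>\<nu> i)"
    by (simp add: ec_g_def late_x seed_distr_def)
  also have "\<dots> \<le> ennreal (\<sigma>\<^sup>2)" by (rule G_var[OF i])
  finally show "(\<integral>\<^sup>+x. ennreal ((norm (Gt (z(Grad t i := x)) t i - gradf i (X (z(Grad t i := x)) t)))\<^sup>2) \<partial>seed_distr \<mu> \<nu> (Grad t i)) \<le> ennreal (\<sigma>\<^sup>2)" .
qed auto

lemma bound_comp:
  assumes i: "i < n"
  shows "(\<integral>\<^sup>+z. ennreal ((norm (\<eta> *\<^sub>R E z t i + Gt z t i - H z t i - Dt z t i))\<^sup>2) \<partial>P)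
       \<le> (\<integral>\<^sup>+z. ennreal ((1 - \<delta>) * (norm (\<eta> *\<^sub>R E z t i + Gt z t i - H z t i))\<^sup>2) \<partial>P)"
proof (rule split_bound[where k="Comp t i", OF Dprob])
  show "(\<lambda>z. ennreal ((norm (\<eta> *\<^sub>R E z t i + Gt z t i - H z t i - Dt z t i))\<^sup>2)) \<in> borel_measurable P"
    using meas_g[OF i] meas_e[OF i] meas_h[OF i] meas_D[OF i] by measurable
  show "(\<lambda>z. ennreal ((1 - \<delta>) * (norm (\<eta> *\<^sub>R E z t i + Gt z t i - H z t i))\<^sup>2)) \<in> borel_measurable P"
    using meas_g[OF i] meas_e[OF i] meas_h[OF i] by measurable
next
  fix z x
  have l: "late t (Comp t i)" by simp
  have ne: "Grad t i \<noteq> Comp t i" by simp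
  show "ennreal ((1 - \<delta>) * (norm (\<eta> *\<^sub>R E (z(Comp t i := x)) t i + Gt (z(Comp t i := x)) t i - H (z(Comp t i := x)) t i))\<^sup>2) =
        ennreal ((1 - \<delta>) * (norm (\<eta> *\<^sub>R E z t i + Gt z t i - H z t i))\<^sup>2)"
    by (simp add: ec_g_def late_x late_e late_h)
next
  fix z assume z: "z \<in> space P"
  let ?v = "\<eta> *\<^sub>R E z t i + Gt z t i - H z t i"
  have "(\<integral>\<^sup>+x. ennreal ((norm (\<eta> *\<^sub>R E (z(Comp t i := x)) t i + Gt (z(Comp t i := x)) t i - H (z(Comp t i := x)) t i - Dt (z(Comp t i := x)) t i))\<^sup>2) \<partial>seed_distr \<mu> \<nu> (Comp t i))
     = (\<integral>\<^sup>+x. ennreal ((norm (C x ?v - ?v))\<^sup>2) \<partial>\<mu>)"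
    unfolding seed_distr_def seed_idx.case
    by (intro nn_integral_cong) (simp add: ec_g_def ec_D_def late_x late_e late_h norm_minus_commute)
  also have "\<dots> \<le> ennreal ((1 - \<delta>) * (norm ?v)\<^sup>2)" by (rule C_contr)
  finally show "(\<integral>\<^sup>+x. ennreal ((norm (\<eta> *\<^sub>R E (z(Comp t i := x)) t i + Gt (z(Comp t i := x)) t i - H (z(Comp t i := x)) t i - Dt (z(Comp t i := x)) t i))\<^sup>2) \<partial>seed_distr \<mu> \<nu> (Comp t i))
     \<le> ennreal ((1 - \<delta>) * (norm ?v)\<^sup>2)" .
qed

lemma bound_next:
  assumes i: "i < n"
  shows "(\<integral>\<^sup>+z. ennreal ((norm (\<eta> *\<^sub>R E z (Suc t) i + Gt z (Suc t) i - H z (Suc t) i))\<^sup>2) \<partial>P)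
       \<le> (\<integral>\<^sup>+z. ennreal ((norm (\<eta> *\<^sub>R E z (Suc t) i - H z (Suc t) i + gradf i (X z (Suc t))))\<^sup>2 + \<sigma>\<^sup>2) \<partial>P)"
proof (rule split_bound[where k="Grad (Suc t) i", OF Dprob])
  show "(\<lambda>z. ennreal ((norm (\<eta> *\<^sub>R E z (Suc t) i + Gt z (Suc t) i - H z (Suc t) i))\<^sup>2)) \<in> borel_measurable P"
    using meas_g[OF i] meas_e[OF i] meas_h[OF i] by measurable
  show "(\<lambda>z. ennreal ((norm (\<eta> *\<^sub>R E z (Suc t) i - H z (Suc t) i + gradf i (X z (Suc t))))\<^sup>2 + \<sigma>\<^sup>2)) \<in> borel_measurable P"
    using meas_gradf[OF i meas_x] meas_e[OF i] meas_h[OF i] by measurable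
next
  fix z x
  show "ennreal ((norm (\<eta> *\<^sub>R E (z(Grad (Suc t) i := x)) (Suc t) i - H (z(Grad (Suc t) i := x)) (Suc t) i + gradf i (X (z(Grad (Suc t) i := x)) (Suc t))))\<^sup>2 + \<sigma>\<^sup>2) =
        ennreal ((norm (\<eta> *\<^sub>R E z (Suc t) i - H z (Suc t) i + gradf i (X z (Suc t))))\<^sup>2 + \<sigma>\<^sup>2)"
    by (simp add: late_x late_e late_h)
next
  fix z assume z: "z \<in> space P"
  let ?a = "\<eta> *\<^sub>R E z (Suc t) i - H z (Suc t) i + gradf i (X z (Suc t))"
  let ?x = "X z (Suc t)"
  have "(\<integral>\<^sup>+x. ennreal ((norm (\<eta> *\<^sub>R E (z(Grad (Suc t) i := x)) (Suc t) i + Gt (z(Grad (Suc t) i := x)) (Suc t) i - H (z(Grad (Suc t) i := x)) (Suc t) i))\<^sup>2) \<partial>seed_distr \<mu> \<nu> (Grad (Suc t) i))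
     = (\<integral>\<^sup>+x. ennreal ((norm (?a + G i x ?x - gradf i ?x))\<^sup>2) \<partial>\<nu> i)"
    unfolding seed_distr_def seed_idx.case
    by (intro nn_integral_cong) (simp add: ec_g_def late_x late_e late_h algebra_simps)
  also have "\<dots> \<le> ennreal ((norm ?a)\<^sup>2 + \<sigma>\<^sup>2)"
    by (rule noise_inner[OF nu_prob[OF i] G_meas[OF i] G_int[OF i] G_unbiased[OF i] G_var[OF i]])
  finally show "(\<integral>\<^sup>+x. ennreal ((norm (\<eta> *\<^sub>R E (z(Grad (Suc t) i := x)) (Suc t) i + Gt (z(Grad (Suc t) i := x)) (Suc t) i - H (z(Grad (Suc t) i := x)) (Suc t) i))\<^sup>2) \<partial>seed_distr \<mu> \<nu> (Grad (Suc t) i))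
     \<le> ennreal ((norm ?a)\<^sup>2 + \<sigma>\<^sup>2)" .
qed

end



lemma young_half:
  fixes a b :: "'a::real_normed_vector"
  shows "(norm (a + b))\<^sup>2 \<le> 2 * (norm a)\<^sup>2 + 2 * (norm b)\<^sup>2"
  using young2[of 1 a b] by simp

lemma per_i_bound:
  fixes r e \<xi> d :: "'v::real_normed_vector"
  assumes d: "0 < \<delta>" "\<delta> \<le> 1"
  shows "(norm ((1 + \<eta>) *\<^sub>R r - \<eta>\<^sup>2 *\<^sub>R e - \<xi> + d))\<^sup>2
     \<le> (1 + \<delta>/4) * (1 + \<eta>)\<^sup>2 * (norm r)\<^sup>2 + 8 * \<eta>^4 / \<delta> * (norm e)\<^sup>2 + 40 / \<delta> * (norm \<xi>)\<^sup>2 + 20 / \<delta> * (norm d)\<^sup>2"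
proof -
  let ?b = "- (\<eta>\<^sup>2 *\<^sub>R e) + (- \<xi> + d)"
  have eq: "(1 + \<eta>) *\<^sub>R r - \<eta>\<^sup>2 *\<^sub>R e - \<xi> + d = (1 + \<eta>) *\<^sub>R r + ?b" by (simp add: algebra_simps)
  have s1: "(norm ((1 + \<eta>) *\<^sub>R r + ?b))\<^sup>2 \<le> (1 + \<delta>/4) * (norm ((1 + \<eta>) *\<^sub>R r))\<^sup>2 + (1 + 1/(\<delta>/4)) * (norm ?b)\<^sup>2"
    by (rule young2) (use d in simp)
  have s2: "(norm ?b)\<^sup>2 \<le> (1 + 3/5) * (norm (- (\<eta>\<^sup>2 *\<^sub>R e)))\<^sup>2 + (1 + 1/(3/5)) * (norm (- \<xi> + d))\<^sup>2"
    by (rule young2) simp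
  have s3: "(norm (- \<xi> + d))\<^sup>2 \<le> (1 + 2) * (norm (- \<xi>))\<^sup>2 + (1 + 1/2) * (norm d)\<^sup>2"
    by (rule young2) simp
  have ne: "(norm (- (\<eta>\<^sup>2 *\<^sub>R e)))\<^sup>2 = \<eta>^4 * (norm e)\<^sup>2"
    by (simp add: power_mult_distrib power2_eq_square eval_nat_numeral)
  have nr: "(norm ((1 + \<eta>) *\<^sub>R r))\<^sup>2 = (1 + \<eta>)\<^sup>2 * (norm r)\<^sup>2"
    by (simp add: power_mult_distrib)
  have b: "(norm ?b)\<^sup>2 \<le> 8/5 * \<eta>^4 * (norm e)\<^sup>2 + 8 * (norm \<xi>)\<^sup>2 + 4 * (norm d)\<^sup>2"
    using s2 s3 ne by simp
  have k: "1 + 1/(\<delta>/4) \<le> 5 / \<delta>" using d by (simp add: field_simps)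
  have "(1 + 1/(\<delta>/4)) * (norm ?b)\<^sup>2 \<le> 5 / \<delta> * (norm ?b)\<^sup>2"
    using k by (intro mult_right_mono) auto
  also have "\<dots> \<le> 5 / \<delta> * (8/5 * \<eta>^4 * (norm e)\<^sup>2 + 8 * (norm \<xi>)\<^sup>2 + 4 * (norm d)\<^sup>2)"
    using b d by (intro mult_left_mono) auto
  also have "\<dots> = 8 * \<eta>^4 / \<delta> * (norm e)\<^sup>2 + 40 / \<delta> * (norm \<xi>)\<^sup>2 + 20 / \<delta> * (norm d)\<^sup>2"
    using d by (simp add: field_simps)
  finally have "(1 + 1/(\<delta>/4)) * (norm ?b)\<^sup>2 \<le> 8 * \<eta>^4 / \<delta> * (norm e)\<^sup>2 + 40 / \<delta> * (norm \<xi>)\<^sup>2 + 20 / \<delta> * (norm d)\<^sup>2" .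
  then show ?thesis using s1 unfolding eq nr by simp
qed

lemma hb_bound:
  fixes \<xi> e r :: "nat \<Rightarrow> 'v::real_normed_vector"
  assumes n: "n \<ge> 1"
  shows "(norm (gf + (1 / real n) *\<^sub>R (\<Sum>j<n. \<xi> j) + \<eta> *\<^sub>R ((1 / real n) *\<^sub>R (\<Sum>j<n. e j)) - (1 / real n) *\<^sub>R (\<Sum>j<n. r j)))\<^sup>2
    \<le> 4 * (norm gf)\<^sup>2 + 4 * ((1 / real n) * (\<Sum>j<n. (norm (\<xi> j))\<^sup>2))
       + 4 * \<eta>\<^sup>2 * ((1 / real n) * (\<Sum>j<n. (norm (e j))\<^sup>2)) + 4 * ((1 / real n) * (\<Sum>j<n. (norm (r j))\<^sup>2))"
proof -
  let ?a = gf and ?b = "(1 / real n) *\<^sub>R (\<Sum>j<n. \<xi> j)" and ?c = "\<eta> *\<^sub>R ((1 / real n) *\<^sub>R (\<Sum>j<n. e j))"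
    and ?d = "- ((1 / real n) *\<^sub>R (\<Sum>j<n. r j))"
  have eq: "?a + ?b + ?c - (1 / real n) *\<^sub>R (\<Sum>j<n. r j) = (?a + ?b) + (?c + ?d)" by simp
  have "(norm ((?a + ?b) + (?c + ?d)))\<^sup>2 \<le> 2 * (norm (?a + ?b))\<^sup>2 + 2 * (norm (?c + ?d))\<^sup>2"
    by (rule young_half)
  also have "\<dots> \<le> 2 * (2 * (norm ?a)\<^sup>2 + 2 * (norm ?b)\<^sup>2) + 2 * (2 * (norm ?c)\<^sup>2 + 2 * (norm ?d)\<^sup>2)"
    by (rule add_mono; rule mult_left_mono) (rule young_half, simp)+
  finally have *: "(norm ((?a + ?b) + (?c + ?d)))\<^sup>2 \<le> 4 * (norm ?a)\<^sup>2 + 4 * (norm ?b)\<^sup>2 + 4 * (norm ?c)\<^sup>2 + 4 * (norm ?d)\<^sup>2"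
    by simp
  have b: "(norm ?b)\<^sup>2 \<le> (1 / real n) * (\<Sum>j<n. (norm (\<xi> j))\<^sup>2)" by (rule avg_sq[OF n])
  have d: "(norm ?d)\<^sup>2 \<le> (1 / real n) * (\<Sum>j<n. (norm (r j))\<^sup>2)" using avg_sq[OF n, of r] by simp
  have c: "(norm ?c)\<^sup>2 \<le> \<eta>\<^sup>2 * ((1 / real n) * (\<Sum>j<n. (norm (e j))\<^sup>2))"
  proof -
    have "(norm ?c)\<^sup>2 = \<eta>\<^sup>2 * (norm ((1 / real n) *\<^sub>R (\<Sum>j<n. e j)))\<^sup>2"
      by (simp only: norm_scaleR power_mult_distrib power2_abs)
    also have "\<dots> \<le> \<eta>\<^sup>2 * ((1 / real n) * (\<Sum>j<n. (norm (e j))\<^sup>2))"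
      by (intro mult_left_mono avg_sq[OF n]) auto
    finally show ?thesis .
  qed
  show ?thesis using * b c d unfolding eq by linarith
qed




context ecl2
begin

lemma pointwise:
  fixes Li :: "nat \<Rightarrow> real" and z t
  assumes n: "n \<ge> 1" and d: "0 < \<delta>" "\<delta> \<le> 1"
    and Ls: "\<And>i x y. i < n \<Longrightarrow> norm (gradf i x - gradf i y) \<le> Li i * norm (x - y)"
  defines "L2 \<equiv> (1 / real n) * (\<Sum>i<n. (Li i)\<^sup>2)"
  defines "r \<equiv> (\<lambda>i. \<eta> *\<^sub>R E z t i + Gt z t i - H z t i - Dt z t i)"
  defines "\<xi> \<equiv> (\<lambda>i. Gt z t i - gradf i (X z t))"
  shows "(\<Sum>i<n. (norm (\<eta> *\<^sub>R E z (Suc t) i - H z (Suc t) i + gradf i (X z (Suc t))))\<^sup>2)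
    \<le> ((1 + \<delta>/4) * (1 + \<eta>)\<^sup>2 + 80 * \<gamma>\<^sup>2 * L2 / \<delta>) * (\<Sum>i<n. (norm (r i))\<^sup>2)
      + (8 * \<eta>^4 / \<delta> + 80 * \<gamma>\<^sup>2 * L2 * \<eta>\<^sup>2 / \<delta>) * (\<Sum>i<n. (norm (E z t i))\<^sup>2)
      + (40 / \<delta> + 80 * \<gamma>\<^sup>2 * L2 / \<delta>) * (\<Sum>i<n. (norm (\<xi> i))\<^sup>2)
      + 80 * \<gamma>\<^sup>2 * L2 * real n / \<delta> * (norm ((1 / real n) *\<^sub>R (\<Sum>i<n. gradf i (X z t))))\<^sup>2"
proof -
  let ?gf = "(1 / real n) *\<^sub>R (\<Sum>i<n. gradf i (X z t))"
  let ?hb = "Hb z (Suc t)"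
  let ?SR = "\<Sum>i<n. (norm (r i))\<^sup>2" and ?SE = "\<Sum>i<n. (norm (E z t i))\<^sup>2" and ?SX = "\<Sum>i<n. (norm (\<xi> i))\<^sup>2"
  let ?g = "(norm ?gf)\<^sup>2"
  have hi: "H z t i + Dt z t i = gradf i (X z t) + \<xi> i + \<eta> *\<^sub>R E z t i - r i" for i
    by (simp add: r_def \<xi>_def algebra_simps)
  have "(\<Sum>i<n. H z (Suc t) i) = (\<Sum>i<n. gradf i (X z t)) + (\<Sum>i<n. \<xi> i) + \<eta> *\<^sub>R (\<Sum>i<n. E z t i) - (\<Sum>i<n. r i)"
    by (simp add: ec_h_Suc hi sum.distrib sum_subtractf scaleR_sum_right)
  then have hbS: "?hb = ?gf + (1 / real n) *\<^sub>R (\<Sum>j<n. \<xi> j) + \<eta> *\<^sub>R ((1 / real n) *\<^sub>R (\<Sum>j<n. E z t j)) - (1 / real n) *\<^sub>R (\<Sum>j<n. r j)"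
    by (simp add: ec_hb_avg[of n \<gamma> \<eta> C G x0 z "Suc t"] scaleR_right_distrib scaleR_right_diff_distrib)
  have hbB: "(norm ?hb)\<^sup>2 \<le> 4 * ?g + 4 * ((1 / real n) * ?SX) + 4 * \<eta>\<^sup>2 * ((1 / real n) * ?SE) + 4 * ((1 / real n) * ?SR)"
    unfolding hbS by (rule hb_bound[OF n])
  have xS: "X z (Suc t) - X z t = - (\<gamma> *\<^sub>R ?hb)"
    by (simp add: ec_x_Suc ec_hb_Suc algebra_simps)
  have per: "(norm (\<eta> *\<^sub>R E z (Suc t) i - H z (Suc t) i + gradf i (X z (Suc t))))\<^sup>2
      \<le> (1 + \<delta>/4) * (1 + \<eta>)\<^sup>2 * (norm (r i))\<^sup>2 + 8 * \<eta>^4 / \<delta> * (norm (E z t i))\<^sup>2 + 40 / \<delta> * (norm (\<xi> i))\<^sup>2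
         + 20 / \<delta> * ((Li i)\<^sup>2 * \<gamma>\<^sup>2 * (norm ?hb)\<^sup>2)" if i: "i < n" for i
  proof -
    let ?dd = "gradf i (X z (Suc t)) - gradf i (X z t)"
    have A: "\<eta> *\<^sub>R E z (Suc t) i - H z (Suc t) i + gradf i (X z (Suc t))
        = (1 + \<eta>) *\<^sub>R r i - \<eta>\<^sup>2 *\<^sub>R E z t i - \<xi> i + ?dd"
      by (simp add: ec_e_Suc ec_h_Suc r_def \<xi>_def algebra_simps power2_eq_square)
    have "norm ?dd \<le> Li i * norm (X z (Suc t) - X z t)" by (rule Ls[OF i])
    also have "\<dots> = Li i * (\<bar>\<gamma>\<bar> * norm ?hb)" unfolding xS by simp
    finally have dd1: "norm ?dd \<le> Li i * (\<bar>\<gamma>\<bar> * norm ?hb)" .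
    have "(norm ?dd)\<^sup>2 \<le> (Li i * (\<bar>\<gamma>\<bar> * norm ?hb))\<^sup>2"
      using dd1 by (intro power_mono) auto
    also have "\<dots> = (Li i)\<^sup>2 * \<gamma>\<^sup>2 * (norm ?hb)\<^sup>2" by (simp add: power_mult_distrib)
    finally have dd: "(norm ?dd)\<^sup>2 \<le> (Li i)\<^sup>2 * \<gamma>\<^sup>2 * (norm ?hb)\<^sup>2" .
    have "20 / \<delta> * (norm ?dd)\<^sup>2 \<le> 20 / \<delta> * ((Li i)\<^sup>2 * \<gamma>\<^sup>2 * (norm ?hb)\<^sup>2)"
      using dd d by (intro mult_left_mono) auto
    then show ?thesis unfolding A using per_i_bound[OF d, of \<eta> "r i" "E z t i" "\<xi> i" ?dd] by linarith
  qed
  have "(\<Sum>i<n. (norm (\<eta> *\<^sub>R E z (Suc t) i - H z (Suc t) i + gradf i (X z (Suc t))))\<^sup>2)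
     \<le> (\<Sum>i<n. (1 + \<delta>/4) * (1 + \<eta>)\<^sup>2 * (norm (r i))\<^sup>2 + 8 * \<eta>^4 / \<delta> * (norm (E z t i))\<^sup>2 + 40 / \<delta> * (norm (\<xi> i))\<^sup>2
         + 20 / \<delta> * ((Li i)\<^sup>2 * \<gamma>\<^sup>2 * (norm ?hb)\<^sup>2))"
    by (rule sum_mono) (rule per, simp)
  also have "\<dots> = (1 + \<delta>/4) * (1 + \<eta>)\<^sup>2 * ?SR + 8 * \<eta>^4 / \<delta> * ?SE + 40 / \<delta> * ?SX
         + 20 / \<delta> * \<gamma>\<^sup>2 * (real n * L2) * (norm ?hb)\<^sup>2"
    using n by (simp add: sum.distrib sum_distrib_left sum_distrib_right L2_def mult.assoc mult.left_commute)
  finally have S1: "(\<Sum>i<n. (norm (\<eta> *\<^sub>R E z (Suc t) i - H z (Suc t) i + gradf i (X z (Suc t))))\<^sup>2)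
     \<le> (1 + \<delta>/4) * (1 + \<eta>)\<^sup>2 * ?SR + 8 * \<eta>^4 / \<delta> * ?SE + 40 / \<delta> * ?SX
         + 20 / \<delta> * \<gamma>\<^sup>2 * (real n * L2) * (norm ?hb)\<^sup>2" .
  have L2: "L2 \<ge> 0" unfolding L2_def by (intro mult_nonneg_nonneg sum_nonneg) auto
  have Q: "20 / \<delta> * \<gamma>\<^sup>2 * (real n * L2) \<ge> 0" using d L2 by simp
  have "20 / \<delta> * \<gamma>\<^sup>2 * (real n * L2) * (norm ?hb)\<^sup>2
      \<le> 20 / \<delta> * \<gamma>\<^sup>2 * (real n * L2) * (4 * ?g + 4 * ((1 / real n) * ?SX) + 4 * \<eta>\<^sup>2 * ((1 / real n) * ?SE) + 4 * ((1 / real n) * ?SR))"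
    using hbB Q by (intro mult_left_mono) auto
  also have "\<dots> = 80 * \<gamma>\<^sup>2 * L2 * real n / \<delta> * ?g + 80 * \<gamma>\<^sup>2 * L2 / \<delta> * ?SX
       + 80 * \<gamma>\<^sup>2 * L2 * \<eta>\<^sup>2 / \<delta> * ?SE + 80 * \<gamma>\<^sup>2 * L2 / \<delta> * ?SR"
  proof -
    have alg: "20 / \<delta> * \<gamma>\<^sup>2 * (real n * L2) * (4 * a + 4 * ((1 / real n) * b) + 4 * \<eta>\<^sup>2 * ((1 / real n) * c) + 4 * ((1 / real n) * dd))
      = 80 * \<gamma>\<^sup>2 * L2 * real n / \<delta> * a + 80 * \<gamma>\<^sup>2 * L2 / \<delta> * b + 80 * \<gamma>\<^sup>2 * L2 * \<eta>\<^sup>2 / \<delta> * c + 80 * \<gamma>\<^sup>2 * L2 / \<delta> * dd"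
      for a b c dd :: real
      using n d by (simp add: field_simps)
    show ?thesis by (rule alg)
  qed
  finally have S2: "20 / \<delta> * \<gamma>\<^sup>2 * (real n * L2) * (norm ?hb)\<^sup>2 \<le> 80 * \<gamma>\<^sup>2 * L2 * real n / \<delta> * ?g + 80 * \<gamma>\<^sup>2 * L2 / \<delta> * ?SX
       + 80 * \<gamma>\<^sup>2 * L2 * \<eta>\<^sup>2 / \<delta> * ?SE + 80 * \<gamma>\<^sup>2 * L2 / \<delta> * ?SR" .
  show ?thesis using S1 S2 by (simp add: distrib_right)
qed

end



context ecl2
begin

lemma P_prob: "prob_space P" by (rule prob_space_PiM) (rule Dprob)

lemma main_P:
  fixes Li :: "nat \<Rightarrow> real" and t
  assumes n: "n \<ge> 1" and d: "0 < \<delta>" "\<delta> \<le> 1" and \<sigma>: "\<sigma> \<ge> 0"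
    and Ls: "\<And>i x y. i < n \<Longrightarrow> norm (gradf i x - gradf i y) \<le> Li i * norm (x - y)"
  defines "L2 \<equiv> (1 / real n) * (\<Sum>i<n. (Li i)\<^sup>2)"
  shows "(\<Sum>i<n. \<integral>\<^sup>+z. ennreal ((norm (\<eta> *\<^sub>R E z (Suc t) i + Gt z (Suc t) i - H z (Suc t) i))\<^sup>2) \<partial>P)
    \<le> ennreal (((1 + \<delta>/4) * (1 + \<eta>)\<^sup>2 + 80 * \<gamma>\<^sup>2 * L2 / \<delta>) * (1 - \<delta>))
          * (\<Sum>i<n. \<integral>\<^sup>+z. ennreal ((norm (\<eta> *\<^sub>R E z t i + Gt z t i - H z t i))\<^sup>2) \<partial>P)
      + ennreal (8 * \<eta>^4 / \<delta> + 80 * \<gamma>\<^sup>2 * L2 * \<eta>\<^sup>2 / \<delta>) * (\<Sum>i<n. \<integral>\<^sup>+z. ennreal ((norm (E z t i))\<^sup>2) \<partial>P)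
      + ennreal (80 * \<gamma>\<^sup>2 * L2 * real n / \<delta>) * (\<integral>\<^sup>+z. ennreal ((norm ((1 / real n) *\<^sub>R (\<Sum>i<n. gradf i (X z t))))\<^sup>2) \<partial>P)
      + ennreal ((1 + 40 / \<delta> + 80 * \<gamma>\<^sup>2 * L2 / \<delta>) * (real n * \<sigma>\<^sup>2))"
proof -
  interpret PP: prob_space P by (rule P_prob)
  define A where "A = (\<lambda>i z. (norm (\<eta> *\<^sub>R E z (Suc t) i - H z (Suc t) i + gradf i (X z (Suc t))))\<^sup>2)"
  define R where "R = (\<lambda>i z. (norm (\<eta> *\<^sub>R E z t i + Gt z t i - H z t i - Dt z t i))\<^sup>2)"
  define V where "V = (\<lambda>i z. (norm (\<eta> *\<^sub>R E z t i + Gt z t i - H z t i))\<^sup>2)"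
  define Q where "Q = (\<lambda>i z. (norm (E z t i))\<^sup>2)"
  define Xi where "Xi = (\<lambda>i z. (norm (Gt z t i - gradf i (X z t)))\<^sup>2)"
  define gg where "gg = (\<lambda>z. (norm ((1 / real n) *\<^sub>R (\<Sum>i<n. gradf i (X z t))))\<^sup>2)"
  define c1 where "c1 = (1 + \<delta>/4) * (1 + \<eta>)\<^sup>2 + 80 * \<gamma>\<^sup>2 * L2 / \<delta>"
  define c2 where "c2 = 8 * \<eta>^4 / \<delta> + 80 * \<gamma>\<^sup>2 * L2 * \<eta>\<^sup>2 / \<delta>"
  define c3 where "c3 = 40 / \<delta> + 80 * \<gamma>\<^sup>2 * L2 / \<delta>"
  define c4 where "c4 = 80 * \<gamma>\<^sup>2 * L2 * real n / \<delta>"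
  have L2: "L2 \<ge> 0" unfolding L2_def by (intro mult_nonneg_nonneg sum_nonneg) auto
  have c1: "c1 \<ge> 0" and c2: "c2 \<ge> 0" and c3: "c3 \<ge> 0" and c4: "c4 \<ge> 0"
    using d L2 by (auto simp: c1_def c2_def c3_def c4_def)
  have mA: "A i \<in> borel_measurable P" if "i < n" for i
    unfolding A_def using meas_gradf[OF that meas_x] meas_e[OF that] meas_h[OF that] by measurable
  have mR: "R i \<in> borel_measurable P" if "i < n" for i
    unfolding R_def using meas_g[OF that] meas_e[OF that] meas_h[OF that] meas_D[OF that] by measurable
  have mV: "V i \<in> borel_measurable P" if "i < n" for i
    unfolding V_def using meas_g[OF that] meas_e[OF that] meas_h[OF that] by measurable
  have mQ: "Q i \<in> borel_measurable P" if "i < n" for i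
    unfolding Q_def using meas_e[OF that] by measurable
  have mXi: "Xi i \<in> borel_measurable P" if "i < n" for i
    unfolding Xi_def using meas_g[OF that] meas_gradf[OF that meas_x] by measurable
  have mgg: "gg \<in> borel_measurable P"
  proof -
    have "(\<lambda>z. \<Sum>i<n. gradf i (X z t)) \<in> borel_measurable P"
      by (rule borel_measurable_sum) (use meas_gradf meas_x in auto)
    then show ?thesis unfolding gg_def by measurable
  qed
  have msum: "(\<lambda>z. \<Sum>i<n. F i z) \<in> borel_measurable P" if "\<And>i. i < n \<Longrightarrow> F i \<in> borel_measurable P" for F :: "nat \<Rightarrow> _ \<Rightarrow> real"
    by (rule borel_measurable_sum) (use that in auto)
  have ennsum: "(\<integral>\<^sup>+z. ennreal (\<Sum>i<n. F i z) \<partial>P) = (\<Sum>i<n. \<integral>\<^sup>+z. ennreal (F i z) \<partial>P)"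
    if "\<And>i. i < n \<Longrightarrow> F i \<in> borel_measurable P" "\<And>i z. 0 \<le> F i z" for F :: "nat \<Rightarrow> _ \<Rightarrow> real"
  proof -
    have "(\<integral>\<^sup>+z. ennreal (\<Sum>i<n. F i z) \<partial>P) = (\<integral>\<^sup>+z. (\<Sum>i<n. ennreal (F i z)) \<partial>P)"
      using that(2) by (simp add: sum_ennreal)
    also have "\<dots> = (\<Sum>i<n. \<integral>\<^sup>+z. ennreal (F i z) \<partial>P)"
      by (rule nn_integral_sum) (use that(1) in auto)
    finally show ?thesis .
  qed
  have step1: "(\<Sum>i<n. \<integral>\<^sup>+z. ennreal ((norm (\<eta> *\<^sub>R E z (Suc t) i + Gt z (Suc t) i - H z (Suc t) i))\<^sup>2) \<partial>P)
      \<le> (\<Sum>i<n. \<integral>\<^sup>+z. ennreal (A i z + \<sigma>\<^sup>2) \<partial>P)"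
    by (rule sum_mono) (unfold A_def, rule bound_next, simp)
  also have "\<dots> = (\<integral>\<^sup>+z. ennreal (\<Sum>i<n. A i z + \<sigma>\<^sup>2) \<partial>P)"
    by (rule ennsum[symmetric]) (use mA in \<open>auto simp: A_def\<close>)
  also have "\<dots> \<le> (\<integral>\<^sup>+z. ennreal (c1 * (\<Sum>i<n. R i z) + c2 * (\<Sum>i<n. Q i z) + c3 * (\<Sum>i<n. Xi i z) + c4 * gg z + real n * \<sigma>\<^sup>2) \<partial>P)"
  proof (rule nn_integral_mono, rule ennreal_leI)
    fix z
    have "(\<Sum>i<n. A i z) \<le> c1 * (\<Sum>i<n. R i z) + c2 * (\<Sum>i<n. Q i z) + c3 * (\<Sum>i<n. Xi i z) + c4 * gg z"
      unfolding A_def R_def Q_def Xi_def gg_def c1_def c2_def c3_def c4_def L2_def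
      by (rule pointwise[OF n d Ls]) auto
    then show "(\<Sum>i<n. A i z + \<sigma>\<^sup>2) \<le> c1 * (\<Sum>i<n. R i z) + c2 * (\<Sum>i<n. Q i z) + c3 * (\<Sum>i<n. Xi i z) + c4 * gg z + real n * \<sigma>\<^sup>2"
      by (simp add: sum.distrib)
  qed
  also have "\<dots> = ennreal c1 * (\<integral>\<^sup>+z. ennreal (\<Sum>i<n. R i z) \<partial>P) + ennreal c2 * (\<integral>\<^sup>+z. ennreal (\<Sum>i<n. Q i z) \<partial>P)
      + ennreal c3 * (\<integral>\<^sup>+z. ennreal (\<Sum>i<n. Xi i z) \<partial>P) + ennreal c4 * (\<integral>\<^sup>+z. ennreal (gg z) \<partial>P) + ennreal (real n * \<sigma>\<^sup>2)"
  proof -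
    have nR: "0 \<le> (\<Sum>i<n. R i z)" and nQ: "0 \<le> (\<Sum>i<n. Q i z)" and nX: "0 \<le> (\<Sum>i<n. Xi i z)" and ng: "0 \<le> gg z" for z
      by (auto simp: R_def Q_def Xi_def gg_def intro!: sum_nonneg)
    have mR': "(\<lambda>z. \<Sum>i<n. R i z) \<in> borel_measurable P" by (rule msum[OF mR])
    have mQ': "(\<lambda>z. \<Sum>i<n. Q i z) \<in> borel_measurable P" by (rule msum[OF mQ])
    have mX': "(\<lambda>z. \<Sum>i<n. Xi i z) \<in> borel_measurable P" by (rule msum[OF mXi])
    have eq: "ennreal (c1 * (\<Sum>i<n. R i z) + c2 * (\<Sum>i<n. Q i z) + c3 * (\<Sum>i<n. Xi i z) + c4 * gg z + real n * \<sigma>\<^sup>2)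
       = ennreal c1 * ennreal (\<Sum>i<n. R i z) + ennreal c2 * ennreal (\<Sum>i<n. Q i z) + ennreal c3 * ennreal (\<Sum>i<n. Xi i z)
         + ennreal c4 * ennreal (gg z) + ennreal (real n * \<sigma>\<^sup>2)" for z
      using c1 c2 c3 c4 nR[of z] nQ[of z] nX[of z] ng[of z]
      by (simp add: ennreal_plus[symmetric] ennreal_mult[symmetric] del: ennreal_plus)
    show ?thesis
      unfolding eq
      using mR' mQ' mX' mgg
      by (simp add: nn_integral_add nn_integral_cmult PP.emeasure_space_1)
  qed
  finally have S: "(\<Sum>i<n. \<integral>\<^sup>+z. ennreal ((norm (\<eta> *\<^sub>R E z (Suc t) i + Gt z (Suc t) i - H z (Suc t) i))\<^sup>2) \<partial>P)
     \<le> ennreal c1 * (\<integral>\<^sup>+z. ennreal (\<Sum>i<n. R i z) \<partial>P) + ennreal c2 * (\<integral>\<^sup>+z. ennreal (\<Sum>i<n. Q i z) \<partial>P)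
      + ennreal c3 * (\<integral>\<^sup>+z. ennreal (\<Sum>i<n. Xi i z) \<partial>P) + ennreal c4 * (\<integral>\<^sup>+z. ennreal (gg z) \<partial>P) + ennreal (real n * \<sigma>\<^sup>2)" .
  have IR: "(\<integral>\<^sup>+z. ennreal (\<Sum>i<n. R i z) \<partial>P) \<le> ennreal (1 - \<delta>) * (\<Sum>i<n. \<integral>\<^sup>+z. ennreal (V i z) \<partial>P)"
  proof -
    have "(\<integral>\<^sup>+z. ennreal (\<Sum>i<n. R i z) \<partial>P) = (\<Sum>i<n. \<integral>\<^sup>+z. ennreal (R i z) \<partial>P)"
      by (rule ennsum) (use mR in \<open>auto simp: R_def\<close>)
    also have "\<dots> \<le> (\<Sum>i<n. \<integral>\<^sup>+z. ennreal ((1 - \<delta>) * V i z) \<partial>P)"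
      by (rule sum_mono) (unfold R_def V_def, rule bound_comp, simp)
    also have "\<dots> = (\<Sum>i<n. ennreal (1 - \<delta>) * \<integral>\<^sup>+z. ennreal (V i z) \<partial>P)"
      by (rule sum.cong[OF refl]) (use mV d in \<open>simp add: ennreal_mult V_def nn_integral_cmult\<close>)
    also have "\<dots> = ennreal (1 - \<delta>) * (\<Sum>i<n. \<integral>\<^sup>+z. ennreal (V i z) \<partial>P)"
      by (simp add: sum_distrib_left)
    finally show ?thesis .
  qed
  have IX: "(\<integral>\<^sup>+z. ennreal (\<Sum>i<n. Xi i z) \<partial>P) \<le> ennreal (real n * \<sigma>\<^sup>2)"
  proof -
    have "(\<integral>\<^sup>+z. ennreal (\<Sum>i<n. Xi i z) \<partial>P) = (\<Sum>i<n. \<integral>\<^sup>+z. ennreal (Xi i z) \<partial>P)"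
      by (rule ennsum) (use mXi in \<open>auto simp: Xi_def\<close>)
    also have "\<dots> \<le> (\<Sum>i<n. \<integral>\<^sup>+z. ennreal (\<sigma>\<^sup>2) \<partial>P)"
      by (rule sum_mono) (unfold Xi_def, rule bound_xi, simp)
    also have "\<dots> = ennreal (real n * \<sigma>\<^sup>2)"
      by (simp add: PP.emeasure_space_1 ennreal_mult ennreal_of_nat_eq_real_of_nat)
    finally show ?thesis .
  qed
  have IQ: "(\<integral>\<^sup>+z. ennreal (\<Sum>i<n. Q i z) \<partial>P) = (\<Sum>i<n. \<integral>\<^sup>+z. ennreal (Q i z) \<partial>P)"
    by (rule ennsum) (use mQ in \<open>auto simp: Q_def\<close>)
  have "ennreal c1 * (\<integral>\<^sup>+z. ennreal (\<Sum>i<n. R i z) \<partial>P) \<le> ennreal c1 * (ennreal (1 - \<delta>) * (\<Sum>i<n. \<integral>\<^sup>+z. ennreal (V i z) \<partial>P))"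
    by (rule mult_left_mono[OF IR]) simp
  also have "\<dots> = ennreal (c1 * (1 - \<delta>)) * (\<Sum>i<n. \<integral>\<^sup>+z. ennreal (V i z) \<partial>P)"
    using c1 d by (simp add: ennreal_mult mult.assoc)
  finally have T1: "ennreal c1 * (\<integral>\<^sup>+z. ennreal (\<Sum>i<n. R i z) \<partial>P) \<le> ennreal (c1 * (1 - \<delta>)) * (\<Sum>i<n. \<integral>\<^sup>+z. ennreal (V i z) \<partial>P)" .
  have "ennreal c3 * (\<integral>\<^sup>+z. ennreal (\<Sum>i<n. Xi i z) \<partial>P) + ennreal (real n * \<sigma>\<^sup>2)
      \<le> ennreal c3 * ennreal (real n * \<sigma>\<^sup>2) + ennreal (real n * \<sigma>\<^sup>2)"
    by (intro add_mono mult_left_mono IX) auto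
  also have "\<dots> = ennreal ((1 + c3) * (real n * \<sigma>\<^sup>2))"
    using c3 \<sigma> by (simp add: ennreal_mult[symmetric] ennreal_plus[symmetric] distrib_right del: ennreal_plus)
  finally have T3: "ennreal c3 * (\<integral>\<^sup>+z. ennreal (\<Sum>i<n. Xi i z) \<partial>P) + ennreal (real n * \<sigma>\<^sup>2) \<le> ennreal ((1 + c3) * (real n * \<sigma>\<^sup>2))" .
  have "ennreal c1 * (\<integral>\<^sup>+z. ennreal (\<Sum>i<n. R i z) \<partial>P) + ennreal c2 * (\<integral>\<^sup>+z. ennreal (\<Sum>i<n. Q i z) \<partial>P)
      + ennreal c3 * (\<integral>\<^sup>+z. ennreal (\<Sum>i<n. Xi i z) \<partial>P) + ennreal c4 * (\<integral>\<^sup>+z. ennreal (gg z) \<partial>P) + ennreal (real n * \<sigma>\<^sup>2)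
    = ennreal c1 * (\<integral>\<^sup>+z. ennreal (\<Sum>i<n. R i z) \<partial>P) + ennreal c2 * (\<integral>\<^sup>+z. ennreal (\<Sum>i<n. Q i z) \<partial>P)
      + ennreal c4 * (\<integral>\<^sup>+z. ennreal (gg z) \<partial>P) + (ennreal c3 * (\<integral>\<^sup>+z. ennreal (\<Sum>i<n. Xi i z) \<partial>P) + ennreal (real n * \<sigma>\<^sup>2))"
    by (simp add: ac_simps)
  also have "\<dots> \<le> ennreal (c1 * (1 - \<delta>)) * (\<Sum>i<n. \<integral>\<^sup>+z. ennreal (V i z) \<partial>P) + ennreal c2 * (\<Sum>i<n. \<integral>\<^sup>+z. ennreal (Q i z) \<partial>P)
      + ennreal c4 * (\<integral>\<^sup>+z. ennreal (gg z) \<partial>P) + ennreal ((1 + c3) * (real n * \<sigma>\<^sup>2))"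
    unfolding IQ by (intro add_mono T1 T3 order_refl)
  finally have T: "ennreal c1 * (\<integral>\<^sup>+z. ennreal (\<Sum>i<n. R i z) \<partial>P) + ennreal c2 * (\<integral>\<^sup>+z. ennreal (\<Sum>i<n. Q i z) \<partial>P)
      + ennreal c3 * (\<integral>\<^sup>+z. ennreal (\<Sum>i<n. Xi i z) \<partial>P) + ennreal c4 * (\<integral>\<^sup>+z. ennreal (gg z) \<partial>P) + ennreal (real n * \<sigma>\<^sup>2)
     \<le> ennreal (c1 * (1 - \<delta>)) * (\<Sum>i<n. \<integral>\<^sup>+z. ennreal (V i z) \<partial>P) + ennreal c2 * (\<Sum>i<n. \<integral>\<^sup>+z. ennreal (Q i z) \<partial>P)
      + ennreal c4 * (\<integral>\<^sup>+z. ennreal (gg z) \<partial>P) + ennreal ((1 + c3) * (real n * \<sigma>\<^sup>2))" .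
  have e3: "1 + c3 = 1 + 40 / \<delta> + 80 * \<gamma>\<^sup>2 * L2 / \<delta>" unfolding c3_def by simp
  from order_trans[OF S T] show ?thesis
    unfolding e3 unfolding c1_def c2_def c4_def V_def Q_def gg_def .
qed

end



lemma const_a: 
  fixes \<delta> \<eta> g :: real
  assumes d: "0 < \<delta>" "\<delta> \<le> 1" and e: "0 \<le> \<eta>" "\<eta> \<le> \<delta>/4" and g: "0 \<le> g" "2048 * g \<le> \<delta>\<^sup>2"
  shows "((1 + \<delta>/4) * (1 + \<eta>)\<^sup>2 + 80 * g / \<delta>) * (1 - \<delta>) \<le> 1 - \<delta>/32"
proof -
  have "(1 + \<eta>)\<^sup>2 \<le> (1 + \<delta>/4)\<^sup>2" using e by (intro power_mono) auto
  then have a: "(1 + \<delta>/4) * (1 + \<eta>)\<^sup>2 \<le> (1 + \<delta>/4) ^ 3"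
    using d by (simp add: power3_eq_cube power2_eq_square mult_left_mono)
  have b: "80 * g / \<delta> \<le> 80 * \<delta> / 2048"
    using d g by (simp add: field_simps power2_eq_square)
  have "((1 + \<delta>/4) * (1 + \<eta>)\<^sup>2 + 80 * g / \<delta>) * (1 - \<delta>) \<le> ((1 + \<delta>/4) ^ 3 + 80 * \<delta> / 2048) * (1 - \<delta>)"
    using a b d by (intro mult_right_mono) auto
  also have "\<dots> \<le> 1 - \<delta>/32"
  proof -
    have "((1 + \<delta>/4) ^ 3 + 80 * \<delta> / 2048) * (1 - \<delta>)
       = 1 - \<delta>/4 - 9*\<delta>\<^sup>2/16 - 11*\<delta>^3/64 - \<delta>^4/64 + 80 * \<delta> / 2048 * (1 - \<delta>)"
      by (simp add: field_simps power2_eq_square power3_eq_cube eval_nat_numeral)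
    also have "\<dots> \<le> 1 - \<delta>/32"
    proof -
      have "0 \<le> 9*\<delta>\<^sup>2/16 + 11*\<delta>^3/64 + \<delta>^4/64" using d by simp
      moreover have "80 * \<delta> / 2048 * (1 - \<delta>) \<le> 80 * \<delta> / 2048" using d by (simp add: field_simps)
      ultimately show ?thesis using d by linarith
    qed
    finally show ?thesis .
  qed
  finally show ?thesis .
qed


lemma final_ennreal:
  fixes SVn SV SE IG :: ennreal and n :: nat
  assumes le: "SVn \<le> ennreal a1 * SV + ennreal a2 * SE + ennreal a4 * IG + ennreal a5"
    and n: "n \<ge> 1" and a: "0 \<le> a1" "0 \<le> a2" "0 \<le> a4" "0 \<le> a5"
    and b: "a1 \<le> b1" "a2 \<le> b2" "a4 / real n \<le> b4" "a5 / real n \<le> b5"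
  shows "ennreal (1 / real n) * SVn \<le> ennreal b1 * (ennreal (1 / real n) * SV)
           + ennreal b2 * (ennreal (1 / real n) * SE) + ennreal b4 * IG + ennreal b5"
proof -
  have "ennreal (1 / real n) * SVn \<le> ennreal (1 / real n) * (ennreal a1 * SV + ennreal a2 * SE + ennreal a4 * IG + ennreal a5)"
    by (rule mult_left_mono[OF le]) simp
  also have "\<dots> = ennreal a1 * (ennreal (1 / real n) * SV) + ennreal a2 * (ennreal (1 / real n) * SE)
      + (ennreal (1 / real n) * ennreal a4) * IG + ennreal (1 / real n) * ennreal a5"
    by (simp add: distrib_left ac_simps)
  also have "ennreal (1 / real n) * ennreal a4 = ennreal (a4 / real n)"
    using a by (simp add: ennreal_mult[symmetric])
  also have "ennreal (1 / real n) * ennreal a5 = ennreal (a5 / real n)"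
    using a by (simp add: ennreal_mult[symmetric])
  also have "ennreal a1 * (ennreal (1 / real n) * SV) + ennreal a2 * (ennreal (1 / real n) * SE)
      + ennreal (a4 / real n) * IG + ennreal (a5 / real n)
    \<le> ennreal b1 * (ennreal (1 / real n) * SV) + ennreal b2 * (ennreal (1 / real n) * SE) + ennreal b4 * IG + ennreal b5"
    using b by (intro add_mono mult_right_mono ennreal_leI) auto
  finally show ?thesis .
qed

theorem lemma11:
  fixes M :: "'a measure"
    and Z :: "seed_idx \<Rightarrow> 'a \<Rightarrow> 'r"
    and \<mu> :: "'r measure" and \<nu> :: "nat \<Rightarrow> 'r measure"
    and C :: "'r \<Rightarrow> 'v \<Rightarrow> 'v::euclidean_space"
    and G :: "nat \<Rightarrow> 'r \<Rightarrow> 'v \<Rightarrow> 'v"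
    and f :: "nat \<Rightarrow> 'v \<Rightarrow> real" and gradf :: "nat \<Rightarrow> 'v \<Rightarrow> 'v"
    and n :: nat and L \<delta> \<sigma> \<gamma> \<eta> k :: real and Li :: "nat \<Rightarrow> real" and x0 :: 'v and t :: nat
  assumes n: "n \<ge> 1"
    and M: "prob_space M"
    and \<mu>: "prob_space \<mu>" and \<nu>: "\<And>i. i < n \<Longrightarrow> prob_space (\<nu> i)"
    and indep: "prob_space.indep_vars M (seed_distr \<mu> \<nu>) Z UNIV"
    and distr: "\<And>j. distr M (seed_distr \<mu> \<nu> j) (Z j) = seed_distr \<mu> \<nu> j"
    and \<delta>: "0 < \<delta>" "\<delta> \<le> 1"
    and C_meas: "(\<lambda>(s, v). C s v) \<in> borel_measurable (\<mu> \<Otimes>\<^sub>M borel)"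
    and C_contr: "\<And>v. (\<integral>\<^sup>+ s. ennreal ((norm (C s v - v))\<^sup>2) \<partial>\<mu>) \<le> ennreal ((1 - \<delta>) * (norm v)\<^sup>2)"
    and G_meas: "\<And>i. i < n \<Longrightarrow> (\<lambda>(w, x). G i w x) \<in> borel_measurable (\<nu> i \<Otimes>\<^sub>M borel)"
    and grad: "\<And>i x. i < n \<Longrightarrow> (f i has_derivative (\<lambda>h. gradf i x \<bullet> h)) (at x)"
    and G_int: "\<And>i x. i < n \<Longrightarrow> integrable (\<nu> i) (\<lambda>w. G i w x)"
    and G_unbiased: "\<And>i x. i < n \<Longrightarrow> (\<integral>w. G i w x \<partial>\<nu> i) = gradf i x"
    and \<sigma>: "\<sigma> \<ge> 0"
    and G_var: "\<And>i x. i < n \<Longrightarrow>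
           (\<integral>\<^sup>+ w. ennreal ((norm (G i w x - gradf i x))\<^sup>2) \<partial>\<nu> i) \<le> ennreal (\<sigma>\<^sup>2)"
    and L_smooth: "\<And>x y. norm ((1 / real n) *\<^sub>R (\<Sum>i<n. gradf i x) - (1 / real n) *\<^sub>R (\<Sum>i<n. gradf i y))
                          \<le> L * norm (x - y)"
    and Li_smooth: "\<And>i x y. i < n \<Longrightarrow> norm (gradf i x - gradf i y) \<le> Li i * norm (x - y)"
    and k: "k \<ge> 1"
    and \<eta>: "\<eta> = \<delta> / (4 * k)"
    and \<gamma>: "\<gamma> > 0" "\<gamma> * (32 * sqrt 2 * sqrt ((1 / real n) * (\<Sum>i<n. (Li i)\<^sup>2))) \<le> \<delta>"
  shows
    "(let Lt = sqrt ((1 / real n) * (\<Sum>i<n. (Li i)\<^sup>2));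
          zz = (\<lambda>\<omega> j. Z j \<omega>);
          E = (\<lambda>t. ennreal (1 / real n) *
                 (\<Sum>i<n. \<integral>\<^sup>+ \<omega>. ennreal ((norm (ec_e n \<gamma> \<eta> C G x0 (zz \<omega>) t i))\<^sup>2) \<partial>M));
          H = (\<lambda>t. ennreal (1 / real n) *
                 (\<Sum>i<n. \<integral>\<^sup>+ \<omega>. ennreal ((norm (\<eta> *\<^sub>R ec_e n \<gamma> \<eta> C G x0 (zz \<omega>) t i
                                   + ec_g n \<gamma> \<eta> C G x0 (zz \<omega>) t i - ec_h n \<gamma> \<eta> C G x0 (zz \<omega>) t i))\<^sup>2) \<partial>M));
          GF = (\<lambda>t. \<integral>\<^sup>+ \<omega>. ennreal ((norm ((1 / real n) *\<^sub>R
                        (\<Sum>i<n. gradf i (ec_x n \<gamma> \<eta> C G x0 (zz \<omega>) t))))\<^sup>2) \<partial>M)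
      in H (Suc t) \<le> ennreal (1 - \<delta> / 32) * H t
           + ennreal (8 * \<delta> ^ 3 / (k ^ 4 * 4 ^ 4) + 128 * Lt\<^sup>2 * \<gamma>\<^sup>2 * \<delta> / (k\<^sup>2 * 4\<^sup>2)) * E t
           + ennreal (128 * Lt\<^sup>2 * \<gamma>\<^sup>2 / \<delta>) * GF t
           + ennreal (64 / \<delta> * (1 + Lt\<^sup>2 * \<gamma>\<^sup>2 / real n) * \<sigma>\<^sup>2))"
proof -
  interpret M: prob_space M by (rule M)
  let ?D = "seed_distr \<mu> \<nu>"
  let ?P = "PiM UNIV (seed_distr \<mu> \<nu>)"
  have Zm: "Z j \<in> measurable M (?D j)" for j
    using indep unfolding M.indep_vars_def by auto
  have Dp: "prob_space (?D j)" for j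
    using M.prob_space_distr[OF Zm[of j]] distr[of j] by simp
  have gm: "gradf i \<in> borel_measurable borel" if i: "i < n" for i
  proof -
    have "(max 0 (Li i))-lipschitz_on UNIV (gradf i)"
    proof (rule lipschitz_onI)
      fix x y :: 'v
      have "norm (gradf i x - gradf i y) \<le> Li i * norm (x - y)" by (rule Li_smooth[OF i])
      also have "\<dots> \<le> max 0 (Li i) * norm (x - y)" by (intro mult_right_mono) auto
      finally show "dist (gradf i x) (gradf i y) \<le> max 0 (Li i) * dist x y" by (simp add: dist_norm)
    qed auto
    then have "continuous_on UNIV (gradf i)" by (rule lipschitz_on_continuous_on)
    then show ?thesis by (rule borel_measurable_continuous_onI)
  qed
  interpret L: ecl2 n \<gamma> \<eta> C G x0 \<mu> \<nu> gradf \<delta> \<sigma>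
    by (intro ecl2.intro ecl.intro ecl2_axioms.intro) (fact Dp C_meas G_meas C_contr G_int G_unbiased G_var gm)+
  have zzm: "(\<lambda>\<omega> j. Z j \<omega>) \<in> measurable M ?P"
  proof -
    have "(\<lambda>x. \<lambda>i\<in>UNIV. Z i x) \<in> measurable M ?P" by (rule measurable_restrict) (rule Zm)
    then show ?thesis by (simp add: restrict_UNIV)
  qed
  have dst: "distr M ?P (\<lambda>\<omega> j. Z j \<omega>) = ?P"
  proof -
    have "distr M ?P (\<lambda>x. \<lambda>i\<in>UNIV. Z i x) = (\<Pi>\<^sub>M i\<in>UNIV. distr M (?D i) (Z i))"
      using M.indep_vars_iff_distr_eq_PiM[where I=UNIV and M'="?D" and X=Z] Zm indep by auto
    then show ?thesis using distr by (simp add: restrict_UNIV)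
  qed
  have tr: "(\<integral>\<^sup>+\<omega>. F (\<lambda>j. Z j \<omega>) \<partial>M) = (\<integral>\<^sup>+z. F z \<partial>?P)" if F: "F \<in> borel_measurable ?P" for F
  proof -
    have "(\<integral>\<^sup>+z. F z \<partial>?P) = (\<integral>\<^sup>+z. F z \<partial>distr M ?P (\<lambda>\<omega> j. Z j \<omega>))" by (simp add: dst)
    also have "\<dots> = (\<integral>\<^sup>+\<omega>. F (\<lambda>j. Z j \<omega>) \<partial>M)"
      using F by (intro nn_integral_distr[OF zzm]) simp
    finally show ?thesis by simp
  qed
  have hV: "(\<Sum>i<n. \<integral>\<^sup>+ \<omega>. ennreal ((norm (\<eta> *\<^sub>R ec_e n \<gamma> \<eta> C G x0 (\<lambda>j. Z j \<omega>) s i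
                   + ec_g n \<gamma> \<eta> C G x0 (\<lambda>j. Z j \<omega>) s i - ec_h n \<gamma> \<eta> C G x0 (\<lambda>j. Z j \<omega>) s i))\<^sup>2) \<partial>M)
     = (\<Sum>i<n. \<integral>\<^sup>+ z. ennreal ((norm (\<eta> *\<^sub>R ec_e n \<gamma> \<eta> C G x0 z s i
                   + ec_g n \<gamma> \<eta> C G x0 z s i - ec_h n \<gamma> \<eta> C G x0 z s i))\<^sup>2) \<partial>?P)" for s
  proof (rule sum.cong[OF refl])
    fix i assume "i \<in> {..<n}" then have i: "i < n" by simp
    show "(\<integral>\<^sup>+ \<omega>. ennreal ((norm (\<eta> *\<^sub>R ec_e n \<gamma> \<eta> C G x0 (\<lambda>j. Z j \<omega>) s i
                   + ec_g n \<gamma> \<eta> C G x0 (\<lambda>j. Z j \<omega>) s i - ec_h n \<gamma> \<eta> C G x0 (\<lambda>j. Z j \<omega>) s i))\<^sup>2) \<partial>M)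
     = (\<integral>\<^sup>+ z. ennreal ((norm (\<eta> *\<^sub>R ec_e n \<gamma> \<eta> C G x0 z s i
                   + ec_g n \<gamma> \<eta> C G x0 z s i - ec_h n \<gamma> \<eta> C G x0 z s i))\<^sup>2) \<partial>?P)"
      by (rule tr[of "\<lambda>z. ennreal ((norm (\<eta> *\<^sub>R ec_e n \<gamma> \<eta> C G x0 z s i
                   + ec_g n \<gamma> \<eta> C G x0 z s i - ec_h n \<gamma> \<eta> C G x0 z s i))\<^sup>2)"])
         (use L.meas_g[OF i] L.meas_e[OF i] L.meas_h[OF i] in measurable)
  qed
  have hE: "(\<Sum>i<n. \<integral>\<^sup>+ \<omega>. ennreal ((norm (ec_e n \<gamma> \<eta> C G x0 (\<lambda>j. Z j \<omega>) t i))\<^sup>2) \<partial>M)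
     = (\<Sum>i<n. \<integral>\<^sup>+ z. ennreal ((norm (ec_e n \<gamma> \<eta> C G x0 z t i))\<^sup>2) \<partial>?P)"
  proof (rule sum.cong[OF refl])
    fix i assume "i \<in> {..<n}" then have i: "i < n" by simp
    show "(\<integral>\<^sup>+ \<omega>. ennreal ((norm (ec_e n \<gamma> \<eta> C G x0 (\<lambda>j. Z j \<omega>) t i))\<^sup>2) \<partial>M)
     = (\<integral>\<^sup>+ z. ennreal ((norm (ec_e n \<gamma> \<eta> C G x0 z t i))\<^sup>2) \<partial>?P)"
      by (rule tr[of "\<lambda>z. ennreal ((norm (ec_e n \<gamma> \<eta> C G x0 z t i))\<^sup>2)"])
         (use L.meas_e[OF i] in measurable)
  qed
  have hG: "(\<integral>\<^sup>+ \<omega>. ennreal ((norm ((1 / real n) *\<^sub>R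
                        (\<Sum>i<n. gradf i (ec_x n \<gamma> \<eta> C G x0 (\<lambda>j. Z j \<omega>) t))))\<^sup>2) \<partial>M)
     = (\<integral>\<^sup>+ z. ennreal ((norm ((1 / real n) *\<^sub>R (\<Sum>i<n. gradf i (ec_x n \<gamma> \<eta> C G x0 z t))))\<^sup>2) \<partial>?P)"
  proof (rule tr[of "\<lambda>z. ennreal ((norm ((1 / real n) *\<^sub>R (\<Sum>i<n. gradf i (ec_x n \<gamma> \<eta> C G x0 z t))))\<^sup>2)"])
    have "(\<lambda>z. \<Sum>i<n. gradf i (ec_x n \<gamma> \<eta> C G x0 z t)) \<in> borel_measurable ?P"
      by (rule borel_measurable_sum) (use L.meas_gradf L.meas_x in auto)
    then show "(\<lambda>z. ennreal ((norm ((1 / real n) *\<^sub>R (\<Sum>i<n. gradf i (ec_x n \<gamma> \<eta> C G x0 z t))))\<^sup>2)) \<in> borel_measurable ?P"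
      by measurable
  qed
  define L2 where "L2 = (1 / real n) * (\<Sum>i<n. (Li i)\<^sup>2)"
  have L2: "L2 \<ge> 0" unfolding L2_def by (intro mult_nonneg_nonneg sum_nonneg) auto
  have Lt2: "(sqrt ((1 / real n) * (\<Sum>i<n. (Li i)\<^sup>2)))\<^sup>2 = L2"
    using L2 unfolding L2_def by simp
  have gL: "2048 * (\<gamma>\<^sup>2 * L2) \<le> \<delta>\<^sup>2"
  proof -
    have "(\<gamma> * (32 * sqrt 2 * sqrt L2))\<^sup>2 \<le> \<delta>\<^sup>2"
      using \<gamma> L2 \<delta> unfolding L2_def by (intro power_mono) auto
    then show ?thesis using L2 by (simp add: power_mult_distrib)
  qed
  have eta: "0 \<le> \<eta>" "\<eta> \<le> \<delta> / 4"
  proof -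
    have "0 \<le> \<delta> / (4 * k)" using \<delta> k by simp
    moreover have "\<delta> / (4 * k) \<le> \<delta> / 4" using \<delta> k by (intro divide_left_mono) auto
    ultimately show "0 \<le> \<eta>" "\<eta> \<le> \<delta> / 4" using \<eta> by auto
  qed
  note MP = L.main_P[OF n \<delta> \<sigma> Li_smooth, where t=t, folded L2_def]
  have g0: "0 \<le> \<gamma>\<^sup>2 * L2" using L2 by simp
  have c1: "((1 + \<delta>/4) * (1 + \<eta>)\<^sup>2 + 80 * \<gamma>\<^sup>2 * L2 / \<delta>) * (1 - \<delta>) \<le> 1 - \<delta> / 32"
    using const_a[OF \<delta> eta g0 gL] by (simp add: mult.assoc)
  have k0: "k > 0" using k by simp
  have e4: "8 * \<eta>^4 / \<delta> = 8 * \<delta> ^ 3 / (k ^ 4 * 4 ^ 4)"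
    using \<delta> k0 unfolding \<eta> by (simp add: field_simps power_divide eval_nat_numeral)
  have e2: "80 * \<gamma>\<^sup>2 * L2 * \<eta>\<^sup>2 / \<delta> \<le> 128 * L2 * \<gamma>\<^sup>2 * \<delta> / (k\<^sup>2 * 4\<^sup>2)"
  proof -
    have "80 * \<gamma>\<^sup>2 * L2 * \<eta>\<^sup>2 / \<delta> = 80 * (\<gamma>\<^sup>2 * L2 * \<delta> / (k\<^sup>2 * 4\<^sup>2))"
      using \<delta> k0 unfolding \<eta> by (simp add: field_simps power_divide eval_nat_numeral)
    also have "\<dots> \<le> 128 * (\<gamma>\<^sup>2 * L2 * \<delta> / (k\<^sup>2 * 4\<^sup>2))"
      using \<delta> k0 L2 by (intro mult_right_mono) auto
    finally show ?thesis by (simp add: ac_simps)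
  qed
  have c4: "80 * \<gamma>\<^sup>2 * L2 * real n / \<delta> / real n \<le> 128 * L2 * \<gamma>\<^sup>2 / \<delta>"
  proof -
    have "80 * \<gamma>\<^sup>2 * L2 * real n / \<delta> / real n = 80 * (\<gamma>\<^sup>2 * L2 / \<delta>)" using n by simp
    also have "\<dots> \<le> 128 * (\<gamma>\<^sup>2 * L2 / \<delta>)" using \<delta> L2 by (intro mult_right_mono) auto
    finally show ?thesis by (simp add: ac_simps)
  qed
  have c5: "(1 + 40 / \<delta> + 80 * \<gamma>\<^sup>2 * L2 / \<delta>) * (real n * \<sigma>\<^sup>2) / real n \<le> 64 / \<delta> * (1 + L2 * \<gamma>\<^sup>2 / real n) * \<sigma>\<^sup>2"
  proof -
    have "(1 + 40 / \<delta> + 80 * \<gamma>\<^sup>2 * L2 / \<delta>) * (real n * \<sigma>\<^sup>2) / real n = (1 + 40 / \<delta> + 80 * \<gamma>\<^sup>2 * L2 / \<delta>) * \<sigma>\<^sup>2"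
      using n by simp
    also have "\<dots> \<le> 64 / \<delta> * (1 + L2 * \<gamma>\<^sup>2 / real n) * \<sigma>\<^sup>2"
    proof (rule mult_right_mono)
      have a: "1 \<le> 1 / \<delta>" using \<delta> by simp
      have b: "80 * \<gamma>\<^sup>2 * L2 / \<delta> \<le> 1 / \<delta>"
      proof -
        have "80 * (\<gamma>\<^sup>2 * L2) \<le> 1"
        proof -
          have "\<delta>\<^sup>2 \<le> 1" using \<delta> by (simp add: power_le_one)
          then show ?thesis using gL g0 by linarith
        qed
        then show ?thesis using \<delta> by (simp add: divide_right_mono mult.assoc)
      qed
      have c1: "1 \<le> 1 + L2 * \<gamma>\<^sup>2 / real n" using L2 by simp
      have "64 / \<delta> * 1 \<le> 64 / \<delta> * (1 + L2 * \<gamma>\<^sup>2 / real n)"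
        using \<delta> c1 by (intro mult_left_mono) auto
      then have c: "64 / \<delta> \<le> 64 / \<delta> * (1 + L2 * \<gamma>\<^sup>2 / real n)" by simp
      have "1 + 40 / \<delta> + 80 * \<gamma>\<^sup>2 * L2 / \<delta> \<le> 42 / \<delta>" using a b by (simp add: add_divide_distrib[symmetric])
      also have "\<dots> \<le> 64 / \<delta>" using \<delta> by (simp add: divide_right_mono)
      finally show "1 + 40 / \<delta> + 80 * \<gamma>\<^sup>2 * L2 / \<delta> \<le> 64 / \<delta> * (1 + L2 * \<gamma>\<^sup>2 / real n)" using c by linarith
    qed simp
    finally show ?thesis .
  qed
  have a1: "0 \<le> ((1 + \<delta>/4) * (1 + \<eta>)\<^sup>2 + 80 * \<gamma>\<^sup>2 * L2 / \<delta>) * (1 - \<delta>)"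
    using \<delta> eta L2 by simp
  have a2: "0 \<le> 8 * \<eta>^4 / \<delta> + 80 * \<gamma>\<^sup>2 * L2 * \<eta>\<^sup>2 / \<delta>" using \<delta> L2 by simp
  have a4: "0 \<le> 80 * \<gamma>\<^sup>2 * L2 * real n / \<delta>" using \<delta> L2 by simp
  have a5: "0 \<le> (1 + 40 / \<delta> + 80 * \<gamma>\<^sup>2 * L2 / \<delta>) * (real n * \<sigma>\<^sup>2)" using \<delta> L2 by simp
  have b2: "8 * \<eta>^4 / \<delta> + 80 * \<gamma>\<^sup>2 * L2 * \<eta>\<^sup>2 / \<delta> \<le> 8 * \<delta> ^ 3 / (k ^ 4 * 4 ^ 4) + 128 * L2 * \<gamma>\<^sup>2 * \<delta> / (k\<^sup>2 * 4\<^sup>2)"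
    using e4 e2 by linarith
  show ?thesis
    unfolding Let_def hV hE hG Lt2
    by (rule final_ennreal[OF MP n a1 a2 a4 a5 c1 b2 c4 c5])
qed

end
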